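(* Let $\mathcal{C}$ be a prevariety over a finite alphabet $A$ and let $\alpha:A^*\to M$ be an $\mathit{SF}(\mathcal{C})$-morphism. There exists a $\mathcal{C}$-morphism $\eta:A^*\to N$ such that for every $u\in A^*$, if $\eta(u)$ is idempotent, then $(\alpha(u))^{\omega+1}=(\alpha(u))^{\omega}$.
   Context: Fix a finite alphabet $A$. A prevariety is a class of regular languages over $A$ containing $\emptyset$ and $A^*$, closed under union, intersection, complement, and under the quotients $u^{-1}L=\{w\mid uw\in L\}$ and $Lu^{-1}=\{w\mid wu\in L\}$. $\mathit{SF}(\mathcal{C})$ is the least class containing $\mathcal{C}$ and all $\{a\}$ ($a\in A$), closed under union, complement and concatenation. For a class $\mathcal{D}$, a $\mathcal{D}$-morphism is a surjective monoid morphism $\eta:A^*\to N$ onto a finite monoid $N$ such that every language $\eta^{-1}(F)$, $F\subseteq N$, belongs to $\mathcal{D}$. For a finite monoid $M$, $\omega$ denotes a positive integer such that $s^\omega$ is idempotent for every $s\in M$. *)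

theory Defs
  imports "HOL-Algebra.Group"
begin

definition regular_lang :: "'a list set \<Rightarrow> bool" where
  "regular_lang L \<longleftrightarrow>
     (\<exists>(Q::nat set) (\<delta>::nat \<Rightarrow> 'a \<Rightarrow> nat) q0 F.
        finite Q \<and> q0 \<in> Q \<and> F \<subseteq> Q \<and> (\<forall>q\<in>Q. \<forall>a. \<delta> q a \<in> Q) \<and>
        L = {w. foldl \<delta> q0 w \<in> F})"

definition prevariety :: "'a list set set \<Rightarrow> bool" where
  "prevariety C \<longleftrightarrow>
     (\<forall>L\<in>C. regular_lang L) \<and> {} \<in> C \<and> UNIV \<in> C \<and>
     (\<forall>K\<in>C. \<forall>L\<in>C. K \<union> L \<in> C) \<and>
     (\<forall>K\<in>C. \<forall>L\<in>C. K \<inter> L \<in> C) \<and>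
     (\<forall>L\<in>C. - L \<in> C) \<and>
     (\<forall>L\<in>C. \<forall>u. {w. u @ w \<in> L} \<in> C) \<and>
     (\<forall>L\<in>C. \<forall>u. {w. w @ u \<in> L} \<in> C)"

definition lconc :: "'a list set \<Rightarrow> 'a list set \<Rightarrow> 'a list set" where
  "lconc K L = {u @ v | u v. u \<in> K \<and> v \<in> L}"

inductive_set SF :: "'a list set set \<Rightarrow> 'a list set set" for C where
  base: "L \<in> C \<Longrightarrow> L \<in> SF C"
| letter: "{[a]} \<in> SF C"
| union: "K \<in> SF C \<Longrightarrow> L \<in> SF C \<Longrightarrow> K \<union> L \<in> SF C"
| compl: "L \<in> SF C \<Longrightarrow> - L \<in> SF C"
| conc: "K \<in> SF C \<Longrightarrow> L \<in> SF C \<Longrightarrow> lconc K L \<in> SF C"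

definition word_morphism :: "('a list \<Rightarrow> 'm) \<Rightarrow> ('m, 'b) monoid_scheme \<Rightarrow> bool" where
  "word_morphism \<eta> N \<longleftrightarrow>
     monoid N \<and> finite (carrier N) \<and> range \<eta> = carrier N \<and>
     \<eta> [] = \<one>\<^bsub>N\<^esub> \<and> (\<forall>u v. \<eta> (u @ v) = \<eta> u \<otimes>\<^bsub>N\<^esub> \<eta> v)"

definition class_morphism :: "'a list set set \<Rightarrow> ('a list \<Rightarrow> 'm) \<Rightarrow> ('m, 'b) monoid_scheme \<Rightarrow> bool" where
  "class_morphism D \<eta> N \<longleftrightarrow>
     word_morphism \<eta> N \<and> (\<forall>F. F \<subseteq> carrier N \<longrightarrow> \<eta> -` F \<in> D)"

end

theory Submission
  imports Defs
begin


definition pw :: "'a list \<Rightarrow> nat \<Rightarrow> 'a list" where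
  "pw u k = concat (replicate k u)"

lemma pw_0[simp]: "pw u 0 = []" by (simp add: pw_def)
lemma pw_Suc: "pw u (Suc k) = u @ pw u k" by (simp add: pw_def)
lemma pw_add: "pw u (a + b) = pw u a @ pw u b"
  by (induct a) (simp_all add: pw_Suc)
lemma pw_Suc2: "pw u (Suc k) = pw u k @ u"
  by (induct k) (simp_all add: pw_Suc)
lemma pw_split: "pw u (i + Suc j) = pw u i @ u @ pw u j"
  by (simp only: pw_add pw_Suc)
lemma pw_len: "length (pw u k) = k * length u"
  by (induct k) (simp_all add: pw_Suc)
lemma pw_nil[simp]: "pw [] k = []"
  by (simp add: pw_def)

definition stab :: "'a list set \<Rightarrow> 'a list \<Rightarrow> nat \<Rightarrow> bool" where
  "stab L u n \<longleftrightarrow> (\<forall>x y k. n \<le> k \<longrightarrow> (x @ pw u k @ y \<in> L \<longleftrightarrow> x @ pw u (Suc k) @ y \<in> L))"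

lemma stab_mono: "stab L u n \<Longrightarrow> n \<le> m \<Longrightarrow> stab L u m"
  unfolding stab_def by (meson le_trans)

lemma stabD1: "stab L u n \<Longrightarrow> n \<le> k \<Longrightarrow> x @ pw u k @ y \<in> L \<Longrightarrow> x @ pw u (Suc k) @ y \<in> L"
  unfolding stab_def by blast
lemma stabD2: "stab L u n \<Longrightarrow> n \<le> k \<Longrightarrow> x @ pw u (Suc k) @ y \<in> L \<Longrightarrow> x @ pw u k @ y \<in> L"
  unfolding stab_def by blast

lemma split3:
  "x @ pw u k @ y = v @ w \<Longrightarrow>
    (\<exists>x2. x = v @ x2 \<and> w = x2 @ pw u k @ y) \<or>
    (\<exists>i j u1 u2. Suc (i+j) = k \<and> u = u1@u2 \<and> v = x @ pw u i @ u1 \<and> w = u2 @ pw u j @ y) \<or>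
    (\<exists>y1. y = y1 @ w \<and> v = x @ pw u k @ y1)"
proof (induct k arbitrary: x)
  case 0
  then have "x @ y = v @ w" by simp
  then obtain us where "x = v @ us \<and> us @ y = w \<or> x @ us = v \<and> y = us @ w"
    unfolding append_eq_append_conv2 by blast
  then show ?case by force
next
  case (Suc k)
  have "(x @ u) @ pw u k @ y = v @ w" using Suc.prems by (simp add: pw_Suc)
  from Suc.hyps[OF this] show ?case
  proof (elim disjE exE conjE)
    fix x2 assume a: "x @ u = v @ x2" "w = x2 @ pw u k @ y"
    from a(1) obtain us where "x = v @ us \<and> us @ u = x2 \<or> x @ us = v \<and> u = us @ x2"
      by (auto simp: append_eq_append_conv2)
    then show ?thesis
    proof
      assume b: "x = v @ us \<and> us @ u = x2"
      then have "w = us @ pw u (Suc k) @ y" using a by (simp add: pw_Suc)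
      then show ?thesis using b by blast
    next
      assume b: "x @ us = v \<and> u = us @ x2"
      have "Suc (0 + k) = Suc k \<and> u = us @ x2 \<and> v = x @ pw u 0 @ us \<and> w = x2 @ pw u k @ y"
        using a b by simp
      then show ?thesis by blast
    qed
  next
    fix i j u1 u2 assume a: "Suc (i + j) = k" "u = u1 @ u2" "v = (x @ u) @ pw u i @ u1" "w = u2 @ pw u j @ y"
    have "Suc (Suc i + j) = Suc k \<and> u = u1 @ u2 \<and> v = x @ pw u (Suc i) @ u1 \<and> w = u2 @ pw u j @ y"
      using a by (simp add: pw_Suc)
    then show ?thesis by blast
  next
    fix y1 assume a: "y = y1 @ w" "v = (x @ u) @ pw u k @ y1"
    then show ?thesis by (simp add: pw_Suc)
  qed
qed

lemma lconcI: "v \<in> K \<Longrightarrow> w \<in> L \<Longrightarrow> v @ w \<in> lconc K L"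
  unfolding lconc_def by blast

lemma stab_conc:
  assumes K: "stab K u a" and L: "stab L u b"
  shows "stab (lconc K L) u (a+b+1)"
  unfolding stab_def
proof (intro allI impI iffI)
  fix x y k assume k: "a + b + 1 \<le> k"
  {
    assume "x @ pw u k @ y \<in> lconc K L"
    then obtain v w where vw: "v \<in> K" "w \<in> L" "x @ pw u k @ y = v @ w" by (auto simp: lconc_def)
    from split3[OF vw(3)] show "x @ pw u (Suc k) @ y \<in> lconc K L"
    proof (elim disjE exE conjE)
      fix x2 assume c: "x = v @ x2" "w = x2 @ pw u k @ y"
      have h1: "x2 @ pw u (Suc k) @ y \<in> L" using stabD1[OF L, of k x2 y] vw(2) c k by simp
      have h2: "x @ pw u (Suc k) @ y = v @ (x2 @ pw u (Suc k) @ y)" using c by simp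
      show ?thesis unfolding h2 using h1 vw(1) by (intro lconcI) simp_all
    next
      fix i j u1 u2 assume c: "Suc (i + j) = k" "u = u1 @ u2" "v = x @ pw u i @ u1" "w = u2 @ pw u j @ y"
      show ?thesis
      proof (cases "a \<le> i")
        case True
        have h1: "x @ pw u (Suc i) @ u1 \<in> K" using stabD1[OF K True, of x u1] vw(1) c by simp
        have h2: "x @ pw u (Suc k) @ y = (x @ pw u (Suc i) @ u1) @ (u2 @ pw u j @ y)"
          using c pw_split[of u "Suc i" j] by simp
        show ?thesis unfolding h2 using h1 vw(2) c by (intro lconcI) simp_all
      next
        case False
        then have "b \<le> j" using c k by linarith
        then have h1: "u2 @ pw u (Suc j) @ y \<in> L" using stabD1[OF L, of j u2 y] vw(2) c by simp
        have h2: "x @ pw u (Suc k) @ y = (x @ pw u i @ u1) @ (u2 @ pw u (Suc j) @ y)"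
          using c pw_split[of u i "Suc j"] by simp
        show ?thesis unfolding h2 using h1 vw(1) c by (intro lconcI) simp_all
      qed
    next
      fix y1 assume c: "y = y1 @ w" "v = x @ pw u k @ y1"
      have h1: "x @ pw u (Suc k) @ y1 \<in> K" using stabD1[OF K, of k x y1] vw(1) c k by simp
      have h2: "x @ pw u (Suc k) @ y = (x @ pw u (Suc k) @ y1) @ w" using c by simp
      show ?thesis unfolding h2 using h1 vw(2) by (intro lconcI) simp_all
    qed
  }
  {
    assume "x @ pw u (Suc k) @ y \<in> lconc K L"
    then obtain v w where vw: "v \<in> K" "w \<in> L" "x @ pw u (Suc k) @ y = v @ w" by (auto simp: lconc_def)
    from split3[OF vw(3)] show "x @ pw u k @ y \<in> lconc K L"
    proof (elim disjE exE conjE)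
      fix x2 assume c: "x = v @ x2" "w = x2 @ pw u (Suc k) @ y"
      have h1: "x2 @ pw u k @ y \<in> L" using stabD2[OF L, of k x2 y] vw(2) c k by simp
      have h2: "x @ pw u k @ y = v @ (x2 @ pw u k @ y)" using c by simp
      show ?thesis unfolding h2 using h1 vw(1) by (intro lconcI) simp_all
    next
      fix i j u1 u2 assume c: "Suc (i + j) = Suc k" "u = u1 @ u2" "v = x @ pw u i @ u1" "w = u2 @ pw u j @ y"
      show ?thesis
      proof (cases "a < i")
        case True
        then obtain i' where i': "i = Suc i'" "a \<le> i'" by (cases i) auto
        have h1: "x @ pw u i' @ u1 \<in> K" using stabD2[OF K, of i' x u1] vw(1) c i' by simp
        have h2: "x @ pw u k @ y = (x @ pw u i' @ u1) @ (u2 @ pw u j @ y)"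
          using c i' pw_split[of u i' j] by simp
        show ?thesis unfolding h2 using h1 vw(2) c by (intro lconcI) simp_all
      next
        case False
        then obtain j' where j': "j = Suc j'" "b \<le> j'" using c k by (cases j) auto
        then have h1: "u2 @ pw u j' @ y \<in> L" using stabD2[OF L, of j' u2 y] vw(2) c by simp
        have h2: "x @ pw u k @ y = (x @ pw u i @ u1) @ (u2 @ pw u j' @ y)"
          using c j' pw_split[of u i j'] by simp
        show ?thesis unfolding h2 using h1 vw(1) c by (intro lconcI) simp_all
      qed
    next
      fix y1 assume c: "y = y1 @ w" "v = x @ pw u (Suc k) @ y1"
      have h1: "x @ pw u k @ y1 \<in> K" using stabD2[OF K, of k x y1] vw(1) c k by simp
      have h2: "x @ pw u k @ y = (x @ pw u k @ y1) @ w" using c by simp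
      show ?thesis unfolding h2 using h1 vw(2) by (intro lconcI) simp_all
    qed
  }
qed

definition hypB :: "'a list set set \<Rightarrow> 'a list \<Rightarrow> bool" where
  "hypB B u \<longleftrightarrow> (\<forall>K\<in>B. \<forall>x y k. (x @ pw u (Suc k) @ y \<in> K \<longleftrightarrow> x @ u @ y \<in> K))"

lemma hypB_Un: "hypB (B1 \<union> B2) u \<Longrightarrow> hypB B1 u \<and> hypB B2 u"
  unfolding hypB_def by simp

lemma stab_Un: assumes "stab K u n" "stab L u n" shows "stab (K \<union> L) u n"
  unfolding stab_def
proof (intro allI impI)
  fix x y k assume k: "n \<le> k"
  show "(x @ pw u k @ y \<in> K \<union> L) = (x @ pw u (Suc k) @ y \<in> K \<union> L)"
    using stabD1[OF assms(1) k, of x y] stabD2[OF assms(1) k, of x y]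
      stabD1[OF assms(2) k, of x y] stabD2[OF assms(2) k, of x y] by blast
qed

lemma stab_Compl: assumes "stab L u n" shows "stab (- L) u n"
  unfolding stab_def
proof (intro allI impI)
  fix x y k assume k: "n \<le> k"
  show "(x @ pw u k @ y \<in> - L) = (x @ pw u (Suc k) @ y \<in> - L)"
    using stabD1[OF assms(1) k, of x y] stabD2[OF assms(1) k, of x y] by blast
qed

lemma stab_base: "hypB {L} u \<Longrightarrow> stab L u 1"
  unfolding stab_def hypB_def
proof (intro allI impI)
  fix x y k assume h: "\<forall>K\<in>{L}. \<forall>x y k. (x @ pw u (Suc k) @ y \<in> K) = (x @ u @ y \<in> K)"
    and "1 \<le> (k::nat)"
  then obtain k' where "k = Suc k'" by (cases k) auto
  then show "(x @ pw u k @ y \<in> L) = (x @ pw u (Suc k) @ y \<in> L)" using h by simp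
qed

lemma stab_letter: "\<exists>n. stab {[a]} u n"
proof (cases "u = []")
  case True then have "stab {[a]} u 0" unfolding stab_def by simp
  then show ?thesis by blast
next
  case False
  have "stab {[a]} u 2" unfolding stab_def
  proof (intro allI impI)
    fix x y k assume k: "2 \<le> (k::nat)"
    have lu: "1 \<le> length u" using False by (cases u) auto
    have "2 * 1 \<le> k * length u" using mult_le_mono[OF k lu] .
    moreover have "2 * 1 \<le> Suc k * length u" using mult_le_mono[OF _ lu, of 2 "Suc k"] k by simp
    ultimately have "length (pw u k) \<ge> 2" "length (pw u (Suc k)) \<ge> 2" by (simp_all only: pw_len)
    then have "length (x @ pw u k @ y) \<noteq> 1" "length (x @ pw u (Suc k) @ y) \<noteq> 1" by auto
    then show "(x @ pw u k @ y \<in> {[a]}) = (x @ pw u (Suc k) @ y \<in> {[a]})"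
      by (metis length_Cons list.size(3) singletonD One_nat_def)
  qed
  then show ?thesis by blast
qed

lemma SF_stab:
  assumes "L \<in> SF C"
  shows "\<exists>B. finite B \<and> B \<subseteq> C \<and> (\<forall>u. hypB B u \<longrightarrow> (\<exists>n. stab L u n))"
  using assms
proof (induct rule: SF.induct)
  case (base L)
  show ?case using base stab_base by (intro exI[of _ "{L}"]) blast
next
  case (letter a)
  show ?case by (intro exI[of _ "{}"]) (simp add: stab_letter)
next
  case (union K L)
  from union.hyps(2) obtain B1 where B1: "finite B1" "B1 \<subseteq> C"
    "\<forall>u. hypB B1 u \<longrightarrow> (\<exists>n. stab K u n)" by blast
  from union.hyps(4) obtain B2 where B2: "finite B2" "B2 \<subseteq> C"
    "\<forall>u. hypB B2 u \<longrightarrow> (\<exists>n. stab L u n)" by blast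
  have "\<exists>n. stab (K \<union> L) u n" if h: "hypB (B1 \<union> B2) u" for u
  proof -
    obtain n1 n2 where "stab K u n1" "stab L u n2" using B1(3) B2(3) hypB_Un[OF h] by blast
    then have "stab K u (max n1 n2)" "stab L u (max n1 n2)" by (meson stab_mono max.cobounded1 max.cobounded2)+
    then show ?thesis using stab_Un by blast
  qed
  then show ?case using B1 B2 by (intro exI[of _ "B1 \<union> B2"]) simp
next
  case (compl L)
  then obtain B where B: "finite B" "B \<subseteq> C"
    "\<forall>u. hypB B u \<longrightarrow> (\<exists>n. stab L u n)" by blast
  have "\<exists>n. stab (- L) u n" if h: "hypB B u" for u
    using B(3) h stab_Compl by blast
  then show ?case using B by (intro exI[of _ B]) simp
next
  case (conc K L)
  from conc.hyps(2) obtain B1 where B1: "finite B1" "B1 \<subseteq> C"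
    "\<forall>u. hypB B1 u \<longrightarrow> (\<exists>n. stab K u n)" by blast
  from conc.hyps(4) obtain B2 where B2: "finite B2" "B2 \<subseteq> C"
    "\<forall>u. hypB B2 u \<longrightarrow> (\<exists>n. stab L u n)" by blast
  have "\<exists>n. stab (lconc K L) u n" if h: "hypB (B1 \<union> B2) u" for u
  proof -
    obtain n1 n2 where "stab K u n1" "stab L u n2" using B1(3) B2(3) hypB_Un[OF h] by blast
    then show ?thesis using stab_conc by blast
  qed
  then show ?case using B1 B2 by (intro exI[of _ "B1 \<union> B2"]) simp
qed



lemma foldl_in: "p \<in> Q \<Longrightarrow> \<forall>q\<in>Q. \<forall>a. \<delta> q a \<in> Q \<Longrightarrow> foldl \<delta> p w \<in> Q"
  by (induct w arbitrary: p) auto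

definition Q2 :: "'a list set \<Rightarrow> 'a list set set" where
  "Q2 K = {{w. x @ w @ y \<in> K} | x y. True}"

lemma Q2_finite:
  assumes "regular_lang K" shows "finite (Q2 K)"
proof -
  obtain Q :: "nat set" and \<delta> q0 F where QF: "finite Q" "q0 \<in> Q" "F \<subseteq> Q" "\<forall>q\<in>Q. \<forall>a. \<delta> q a \<in> Q"
    "K = {w. foldl \<delta> q0 w \<in> F}" using assms unfolding regular_lang_def by blast
  have "Q2 K \<subseteq> (\<lambda>(p,G). {w. foldl \<delta> p w \<in> G}) ` (Q \<times> Pow Q)"
  proof
    fix L assume "L \<in> Q2 K"
    then obtain x y where L: "L = {w. x @ w @ y \<in> K}" unfolding Q2_def by blast
    define p where "p = foldl \<delta> q0 x"
    define G where "G = {q\<in>Q. foldl \<delta> q y \<in> F}"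
    have pQ: "p \<in> Q" unfolding p_def using foldl_in[OF QF(2) QF(4)] .
    have "x @ w @ y \<in> K \<longleftrightarrow> foldl \<delta> p w \<in> G" for w
    proof -
      have "foldl \<delta> p w \<in> Q" using foldl_in[OF pQ QF(4)] .
      then show ?thesis unfolding QF(5) G_def p_def by simp
    qed
    then have "L = {w. foldl \<delta> p w \<in> G}" unfolding L by blast
    moreover have "(p, G) \<in> Q \<times> Pow Q" using pQ unfolding G_def by blast
    ultimately show "L \<in> (\<lambda>(p,G). {w. foldl \<delta> p w \<in> G}) ` (Q \<times> Pow Q)" by force
  qed
  then show ?thesis by (rule finite_subset) (simp add: QF(1))
qed

lemma Q2_sub:
  assumes pv: "prevariety C" and K: "K \<in> C" shows "Q2 K \<subseteq> C"
proof
  fix L assume "L \<in> Q2 K"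
  then obtain x y where L: "L = {w. x @ w @ y \<in> K}" unfolding Q2_def by blast
  have "{w. x @ w \<in> K} \<in> C" using pv K unfolding prevariety_def by blast
  then have "{w. w @ y \<in> {w. x @ w \<in> K}} \<in> C" using pv unfolding prevariety_def by blast
  then show "L \<in> C" unfolding L by simp
qed

lemma C_Inter:
  assumes pv: "prevariety C" and fI: "finite I" shows "(\<forall>i\<in>I. f i \<in> C) \<Longrightarrow> (\<Inter>i\<in>I. f i) \<in> C"
  using fI
proof (induct I rule: finite_induct)
  case empty then show ?case using pv unfolding prevariety_def by simp
next
  case (insert a I)
  then have "f a \<in> C" "(\<Inter>i\<in>I. f i) \<in> C" by auto
  then have "f a \<inter> (\<Inter>i\<in>I. f i) \<in> C" using pv unfolding prevariety_def by blast
  then show ?case by simp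
qed

lemma C_Union:
  assumes pv: "prevariety C" and fI: "finite I" shows "(\<forall>i\<in>I. f i \<in> C) \<Longrightarrow> (\<Union>i\<in>I. f i) \<in> C"
  using fI
proof (induct I rule: finite_induct)
  case empty then show ?case using pv unfolding prevariety_def by simp
next
  case (insert a I)
  then have "f a \<in> C" "(\<Union>i\<in>I. f i) \<in> C" by auto
  then have "f a \<union> (\<Union>i\<in>I. f i) \<in> C" using pv unfolding prevariety_def by blast
  then show ?case by simp
qed

lemma build_eta:
  fixes B :: "'a list set set"
  assumes pv: "prevariety C" and fB: "finite B" and BC: "B \<subseteq> C"
  shows "\<exists>(\<eta>::'a list \<Rightarrow> nat) (N::nat monoid). class_morphism C \<eta> N \<and>
           (\<forall>a b. \<eta> a = \<eta> b \<longrightarrow> (\<forall>K\<in>B. a \<in> K \<longleftrightarrow> b \<in> K))"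
proof -
  define QB where "QB = (\<Union>K\<in>B. Q2 K)"
  have fQB: "finite QB" unfolding QB_def
  proof (rule finite_UN_I[OF fB])
    fix K assume "K \<in> B"
    then have "regular_lang K" using BC pv unfolding prevariety_def by blast
    then show "finite (Q2 K)" by (rule Q2_finite)
  qed
  have QBC: "QB \<subseteq> C" unfolding QB_def using BC Q2_sub[OF pv] by blast
  have QB_cl: "\<exists>K\<in>B. \<exists>x y. L = {w. x @ w @ y \<in> K}" if "L \<in> QB" for L
    using that unfolding QB_def Q2_def by blast
  have QB_in: "{w. x @ w @ y \<in> K} \<in> QB" if "K \<in> B" for K x y
    using that unfolding QB_def Q2_def by blast
  define sig where "sig v = {L\<in>QB. v \<in> L}" for v
  obtain g :: "'a list set set \<Rightarrow> nat" where g: "inj_on g (Pow QB)"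
    using finite_imp_inj_to_nat_seg[of "Pow QB"] fQB by auto
  define \<eta> where "\<eta> v = g (sig v)" for v
  have sigP: "sig v \<in> Pow QB" for v unfolding sig_def by blast
  have eta_eq: "\<eta> a = \<eta> b \<longleftrightarrow> sig a = sig b" for a b
    unfolding \<eta>_def using inj_on_eq_iff[OF g sigP sigP] .
  have sig_eq: "sig a = sig b \<longleftrightarrow> (\<forall>L\<in>QB. a \<in> L \<longleftrightarrow> b \<in> L)" for a b
    unfolding sig_def
  proof
    assume e: "{L\<in>QB. a \<in> L} = {L\<in>QB. b \<in> L}"
    show "\<forall>L\<in>QB. a \<in> L \<longleftrightarrow> b \<in> L"
    proof
      fix L assume "L \<in> QB"
      have "L \<in> {L\<in>QB. a \<in> L} \<longleftrightarrow> L \<in> {L\<in>QB. b \<in> L}" using e by simp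
      then show "a \<in> L \<longleftrightarrow> b \<in> L" using \<open>L \<in> QB\<close> by simp
    qed
  next
    assume "\<forall>L\<in>QB. a \<in> L \<longleftrightarrow> b \<in> L"
    then show "{L\<in>QB. a \<in> L} = {L\<in>QB. b \<in> L}" by (intro Collect_cong) auto
  qed
  have congL: "sig (a @ b) = sig (a' @ b)" if h: "sig a = sig a'" for a a' b
    unfolding sig_eq
  proof
    fix L assume "L \<in> QB"
    then obtain K x y where K: "K \<in> B" and L: "L = {w. x @ w @ y \<in> K}" using QB_cl by blast
    have "{w. x @ w @ (b @ y) \<in> K} \<in> QB" using QB_in[OF K] .
    then have "a \<in> {w. x @ w @ (b @ y) \<in> K} \<longleftrightarrow> a' \<in> {w. x @ w @ (b @ y) \<in> K}"
      using h unfolding sig_eq by (rule bspec[rotated])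
    then show "a @ b \<in> L \<longleftrightarrow> a' @ b \<in> L" unfolding L by simp
  qed
  have congR: "sig (a @ b) = sig (a @ b')" if h: "sig b = sig b'" for a b b'
    unfolding sig_eq
  proof
    fix L assume "L \<in> QB"
    then obtain K x y where K: "K \<in> B" and L: "L = {w. x @ w @ y \<in> K}" using QB_cl by blast
    have "{w. (x @ a) @ w @ y \<in> K} \<in> QB" using QB_in[OF K] .
    then have "b \<in> {w. (x @ a) @ w @ y \<in> K} \<longleftrightarrow> b' \<in> {w. (x @ a) @ w @ y \<in> K}"
      using h unfolding sig_eq by (rule bspec[rotated])
    then show "a @ b \<in> L \<longleftrightarrow> a @ b' \<in> L" unfolding L by simp
  qed
  have cong: "\<eta> (a @ b) = \<eta> (a' @ b')" if "\<eta> a = \<eta> a'" "\<eta> b = \<eta> b'" for a a' b b'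
  proof -
    have "sig a = sig a'" "sig b = sig b'" using that unfolding eta_eq .
    then have "sig (a @ b) = sig (a' @ b')" using congL[OF \<open>sig a = sig a'\<close>, of b] congR[OF \<open>sig b = sig b'\<close>, of a'] by simp
    then show ?thesis unfolding eta_eq .
  qed
  define rep where "rep n = (SOME w. \<eta> w = n)" for n
  have rep: "\<eta> (rep (\<eta> a)) = \<eta> a" for a unfolding rep_def by (rule someI) (rule refl)
  define N :: "nat monoid" where "N = \<lparr>carrier = range \<eta>, mult = (\<lambda>m n. \<eta> (rep m @ rep n)), one = \<eta> []\<rparr>"
  have multN: "\<eta> a \<otimes>\<^bsub>N\<^esub> \<eta> b = \<eta> (a @ b)" for a b
    unfolding N_def using cong[OF rep rep] by simp
  have carN: "carrier N = range \<eta>" and oneN: "\<one>\<^bsub>N\<^esub> = \<eta> []" unfolding N_def by simp_all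
  have mon: "monoid N"
  proof (rule monoidI)
    fix x y assume "x \<in> carrier N" "y \<in> carrier N"
    then obtain a b where "x = \<eta> a" "y = \<eta> b" unfolding carN by blast
    then show "x \<otimes>\<^bsub>N\<^esub> y \<in> carrier N" unfolding carN using multN by simp
  next
    show "\<one>\<^bsub>N\<^esub> \<in> carrier N" unfolding carN oneN by simp
  next
    fix x y z assume "x \<in> carrier N" "y \<in> carrier N" "z \<in> carrier N"
    then obtain a b c where "x = \<eta> a" "y = \<eta> b" "z = \<eta> c" unfolding carN by blast
    then show "x \<otimes>\<^bsub>N\<^esub> y \<otimes>\<^bsub>N\<^esub> z = x \<otimes>\<^bsub>N\<^esub> (y \<otimes>\<^bsub>N\<^esub> z)" using multN by simp
  next
    fix x assume "x \<in> carrier N"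
    then obtain a where "x = \<eta> a" unfolding carN by blast
    then show "\<one>\<^bsub>N\<^esub> \<otimes>\<^bsub>N\<^esub> x = x" unfolding oneN using multN by simp
  next
    fix x assume "x \<in> carrier N"
    then obtain a where "x = \<eta> a" unfolding carN by blast
    then show "x \<otimes>\<^bsub>N\<^esub> \<one>\<^bsub>N\<^esub> = x" unfolding oneN using multN by simp
  qed
  have finN: "finite (carrier N)"
  proof -
    have "range \<eta> \<subseteq> g ` Pow QB" unfolding \<eta>_def using sigP by blast
    then show ?thesis unfolding carN using fQB finite_subset by blast
  qed
  have wm: "word_morphism \<eta> N"
    unfolding word_morphism_def using mon finN carN oneN multN by simp
  have pre: "\<eta> -` F \<in> C" for F
  proof -
    define G where "G = {S\<in>Pow QB. g S \<in> F}"
    have eq: "\<eta> -` F = (\<Union>S\<in>G. \<Inter>L\<in>QB. if L \<in> S then L else - L)"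
    proof (rule Set.set_eqI)
      fix v
      show "v \<in> \<eta> -` F \<longleftrightarrow> v \<in> (\<Union>S\<in>G. \<Inter>L\<in>QB. if L \<in> S then L else - L)"
      proof
        assume "v \<in> \<eta> -` F"
        then have "sig v \<in> G" unfolding G_def \<eta>_def using sigP by simp
        moreover have "v \<in> (\<Inter>L\<in>QB. if L \<in> sig v then L else - L)" unfolding sig_def by auto
        ultimately show "v \<in> (\<Union>S\<in>G. \<Inter>L\<in>QB. if L \<in> S then L else - L)" by blast
      next
        assume "v \<in> (\<Union>S\<in>G. \<Inter>L\<in>QB. if L \<in> S then L else - L)"
        then obtain S where S: "S \<in> G" "\<forall>L\<in>QB. v \<in> (if L \<in> S then L else - L)" by blast
        have "S = sig v"
        proof (rule Set.set_eqI)
          fix L show "L \<in> S \<longleftrightarrow> L \<in> sig v"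
            using S unfolding G_def sig_def by (cases "L \<in> QB") (auto split: if_splits)
        qed
        then show "v \<in> \<eta> -` F" using S(1) unfolding G_def \<eta>_def by simp
      qed
    qed
    have fG: "finite G" unfolding G_def using fQB by simp
    have inC: "(\<Inter>L\<in>QB. if L \<in> S then L else - L) \<in> C" for S
    proof (rule C_Inter[OF pv fQB], intro ballI)
      fix L assume "L \<in> QB"
      then have "L \<in> C" using QBC by blast
      then show "(if L \<in> S then L else - L) \<in> C" using pv unfolding prevariety_def by simp
    qed
    show ?thesis unfolding eq
      by (rule C_Union[OF pv fG]) (intro ballI inC)
  qed
  have rec: "\<forall>a b. \<eta> a = \<eta> b \<longrightarrow> (\<forall>K\<in>B. a \<in> K \<longleftrightarrow> b \<in> K)"
  proof (intro allI impI ballI)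
    fix a b K assume e: "\<eta> a = \<eta> b" and K: "K \<in> B"
    have "{w. [] @ w @ [] \<in> K} \<in> QB" using QB_in[OF K] .
    then have "K \<in> QB" by simp
    then show "a \<in> K \<longleftrightarrow> b \<in> K" using e unfolding eta_eq sig_eq by blast
  qed
  show ?thesis using wm pre rec unfolding class_morphism_def by blast
qed



lemma idem_pow:
  assumes "monoid M" "e \<in> carrier M" "e \<otimes>\<^bsub>M\<^esub> e = e"
  shows "e [^]\<^bsub>M\<^esub> Suc m = e"
proof (induct m)
  case 0 then show ?case using assms monoid.l_one[OF assms(1)] by simp
next
  case (Suc m)
  have "e [^]\<^bsub>M\<^esub> Suc (Suc m) = e [^]\<^bsub>M\<^esub> Suc m \<otimes>\<^bsub>M\<^esub> e" by (rule nat_pow_Suc)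
  then show ?case using Suc assms(3) by simp
qed

theorem proposition3p3:
  fixes C :: "('a::finite) list set set"
    and \<alpha> :: "'a list \<Rightarrow> 'm"
    and M :: "'m monoid"
    and \<omega> :: nat
  assumes "prevariety C"
    and "class_morphism (SF C) \<alpha> M"
    and "\<omega> > 0"
    and "\<forall>s\<in>carrier M. s [^]\<^bsub>M\<^esub> \<omega> \<otimes>\<^bsub>M\<^esub> s [^]\<^bsub>M\<^esub> \<omega> = s [^]\<^bsub>M\<^esub> \<omega>"
  shows "\<exists>(\<eta> :: 'a list \<Rightarrow> nat) (N :: nat monoid). class_morphism C \<eta> N \<and>
           (\<forall>u. \<eta> u \<otimes>\<^bsub>N\<^esub> \<eta> u = \<eta> u \<longrightarrow>
                 \<alpha> u [^]\<^bsub>M\<^esub> (\<omega> + 1) = \<alpha> u [^]\<^bsub>M\<^esub> \<omega>)"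
proof -
  note pv = assms(1)
  have wmA: "word_morphism \<alpha> M" and preA: "\<And>F. F \<subseteq> carrier M \<Longrightarrow> \<alpha> -` F \<in> SF C"
    using assms(2) unfolding class_morphism_def by auto
  have mM: "monoid M" and finM: "finite (carrier M)" and rA: "range \<alpha> = carrier M"
    and homA: "\<And>u v. \<alpha> (u @ v) = \<alpha> u \<otimes>\<^bsub>M\<^esub> \<alpha> v" and oneA: "\<alpha> [] = \<one>\<^bsub>M\<^esub>"
    using wmA unfolding word_morphism_def by auto
  have "\<forall>s\<in>carrier M. \<exists>B. finite B \<and> B \<subseteq> C \<and> (\<forall>u. hypB B u \<longrightarrow> (\<exists>n. stab (\<alpha> -` {s}) u n))"
  proof
    fix s assume "s \<in> carrier M"
    then have "\<alpha> -` {s} \<in> SF C" using preA by simp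
    then show "\<exists>B. finite B \<and> B \<subseteq> C \<and> (\<forall>u. hypB B u \<longrightarrow> (\<exists>n. stab (\<alpha> -` {s}) u n))"
      by (rule SF_stab)
  qed
  then obtain f where f: "\<And>s. s \<in> carrier M \<Longrightarrow> finite (f s) \<and> f s \<subseteq> C \<and>
      (\<forall>u. hypB (f s) u \<longrightarrow> (\<exists>n. stab (\<alpha> -` {s}) u n))"
    by metis
  define BB where "BB = (\<Union>s\<in>carrier M. f s)"
  have fBB: "finite BB" unfolding BB_def using finM f by blast
  have BBC: "BB \<subseteq> C" unfolding BB_def using f by blast
  obtain \<eta> :: "'a list \<Rightarrow> nat" and N :: "nat monoid" where cm: "class_morphism C \<eta> N"
    and rec: "\<forall>a b. \<eta> a = \<eta> b \<longrightarrow> (\<forall>K\<in>BB. a \<in> K \<longleftrightarrow> b \<in> K)"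
    using build_eta[OF pv fBB BBC] by blast
  have homE: "\<And>u v. \<eta> (u @ v) = \<eta> u \<otimes>\<^bsub>N\<^esub> \<eta> v"
    using cm unfolding class_morphism_def word_morphism_def by auto
  have aP: "\<alpha> (pw u k) = \<alpha> u [^]\<^bsub>M\<^esub> k" for u k
  proof (induct k)
    case 0 then show ?case using oneA by simp
  next
    case (Suc k) then show ?case by (simp add: pw_Suc2 homA)
  qed
  have main: "\<alpha> u [^]\<^bsub>M\<^esub> (\<omega> + 1) = \<alpha> u [^]\<^bsub>M\<^esub> \<omega>" if idem: "\<eta> u \<otimes>\<^bsub>N\<^esub> \<eta> u = \<eta> u" for u
  proof -
    have ep: "\<eta> (pw u (Suc k)) = \<eta> u" for k
    proof (induct k)
      case 0 then show ?case by (simp add: pw_Suc)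
    next
      case (Suc k)
      have "\<eta> (pw u (Suc (Suc k))) = \<eta> u \<otimes>\<^bsub>N\<^esub> \<eta> (pw u (Suc k))"
        by (simp only: pw_Suc[of u "Suc k"] homE)
      then show ?case using Suc idem by simp
    qed
    have hyp: "hypB BB u" unfolding hypB_def
    proof (intro ballI allI)
      fix K x y k assume K: "K \<in> BB"
      have "\<eta> (x @ pw u (Suc k) @ y) = \<eta> x \<otimes>\<^bsub>N\<^esub> (\<eta> (pw u (Suc k)) \<otimes>\<^bsub>N\<^esub> \<eta> y)"
        by (simp only: homE)
      also have "\<dots> = \<eta> (x @ u @ y)" by (simp only: ep homE)
      finally show "(x @ pw u (Suc k) @ y \<in> K) = (x @ u @ y \<in> K)" using rec K by blast
    qed
    have au: "\<alpha> u \<in> carrier M" using rA by blast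
    define s where "s = \<alpha> u [^]\<^bsub>M\<^esub> \<omega>"
    have sM: "s \<in> carrier M" unfolding s_def using monoid.nat_pow_closed[OF mM au] .
    have "hypB (f s) u" using hyp sM unfolding hypB_def BB_def by blast
    then obtain n where st: "stab (\<alpha> -` {s}) u n" using f[OF sM] by blast
    define k where "k = \<omega> * Suc n"
    have "1 * n \<le> \<omega> * n" using assms(3) by (intro mult_le_mono) auto
    then have "n \<le> \<omega> * n" by simp
    then have nk: "n \<le> k" unfolding k_def by (simp add: trans_le_add2)
    have "\<alpha> (pw u k) = (\<alpha> u [^]\<^bsub>M\<^esub> \<omega>) [^]\<^bsub>M\<^esub> Suc n"
      unfolding aP k_def by (simp only: monoid.nat_pow_pow[OF mM au])
    also have "\<dots> = s" unfolding s_def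
      by (rule idem_pow[OF mM monoid.nat_pow_closed[OF mM au]]) (use assms(4) au in blast)
    finally have aks: "\<alpha> (pw u k) = s" .
    then have "[] @ pw u k @ [] \<in> \<alpha> -` {s}" by simp
    then have "[] @ pw u (Suc k) @ [] \<in> \<alpha> -` {s}" by (rule stabD1[OF st nk])
    then have "\<alpha> u [^]\<^bsub>M\<^esub> Suc k = s" using aP by simp
    moreover have "\<alpha> u [^]\<^bsub>M\<^esub> Suc k = s \<otimes>\<^bsub>M\<^esub> \<alpha> u"
    proof -
      have "\<alpha> u [^]\<^bsub>M\<^esub> Suc k = \<alpha> u [^]\<^bsub>M\<^esub> k \<otimes>\<^bsub>M\<^esub> \<alpha> u" by (rule nat_pow_Suc)
      moreover have "\<alpha> u [^]\<^bsub>M\<^esub> k = s" using aks aP by simp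
      ultimately show ?thesis by simp
    qed
    ultimately show ?thesis unfolding s_def by simp
  qed
  show ?thesis using cm main by blast
qed

end
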